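(* Let $d\ge 3$, integer $\nu\ge 1$, $s>0$, $z\ge 0$. The function $$\zeta(\lambda_1,\dots,\lambda_\nu)=\frac{\prod_{i=1}^\nu\lambda_i^{d/2-2}}{(\sum_{i=1}^\nu\lambda_i+s)^{d/2}}\exp\!\left(-\frac{\sum_i\lambda_i}{\sum_i\lambda_i+s}\,z\right),\qquad \lambda\in(0,\infty)^\nu,$$ is multivariate totally positive of order two (MTP2), i.e. $\zeta(\lambda)\zeta(\xi)\le\zeta(\lambda\vee\xi)\zeta(\lambda\wedge\xi)$ for all $\lambda,\xi\in(0,\infty)^\nu$, where $\vee,\wedge$ denote componentwise maximum and minimum. *)

theory Defs
  imports Complex_Main
begin

text \<open>The function zeta on (0,oo)^nu; vectors are represented as functions
  nat => real, with only the coordinates 0..nu-1 relevant.\<close>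
definition zeta :: "nat \<Rightarrow> nat \<Rightarrow> real \<Rightarrow> real \<Rightarrow> (nat \<Rightarrow> real) \<Rightarrow> real" where
  "zeta d \<nu> s z l =
     (\<Prod>i<\<nu>. l i powr (real d / 2 - 2)) / ((\<Sum>i<\<nu>. l i) + s) powr (real d / 2)
     * exp (- ((\<Sum>i<\<nu>. l i) / ((\<Sum>i<\<nu>. l i) + s)) * z)"

definition MTP2 :: "nat \<Rightarrow> ((nat \<Rightarrow> real) \<Rightarrow> real) \<Rightarrow> bool" where
  "MTP2 \<nu> f \<longleftrightarrow> (\<forall>l x. (\<forall>i<\<nu>. l i > 0) \<longrightarrow> (\<forall>i<\<nu>. x i > 0) \<longrightarrow>
      f l * f x \<le> f (\<lambda>i. max (l i) (x i)) * f (\<lambda>i. min (l i) (x i)))"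

end

theory Submission
  imports Defs
begin

lemma frac_ineq:
  fixes a b c e s :: real
  assumes "0 \<le> a" "a \<le> b" "b \<le> e" "a + e = b + c" "s > 0"
  shows "a/(a+s)+e/(e+s) \<le> b/(b+s)+c/(c+s)"
proof -
  have q: "(a+s)*(e+s) \<le> (b+s)*(c+s)"
  proof -
    have "(b+s)*(c+s)-(a+s)*(e+s) = (b-a)*(e-b)" using assms(4)
      by (simp add: algebra_simps) (smt (verit) assms(4) mult.commute ring_class.ring_distribs(1))
    moreover have "(b-a)*(e-b) \<ge> 0" using assms by simp
    ultimately show ?thesis by linarith
  qed
  have pa: "a+s>0" "b+s>0" "c+s>0" "e+s>0" using assms by auto
  have "\<And>t. t > -s \<Longrightarrow> t/(t+s) = 1 - s/(t+s)"
    by (simp add: field_simps)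
  have "s/(b+s)+s/(c+s) = s*(a+e+2*s)/((b+s)*(c+s))" using pa assms(4) by (simp add: field_simps)
  also have "\<dots> \<le> s*(a+e+2*s)/((a+s)*(e+s))" using q pa assms
    by (intro divide_left_mono) (auto intro!: mult_nonneg_nonneg mult_pos_pos)
  also have "\<dots> = s/(a+s)+s/(e+s)" using pa by (simp add: field_simps)
  finally have "s/(b+s)+s/(c+s) \<le> s/(a+s)+s/(e+s)" .
  moreover have "a/(a+s) = 1 - s/(a+s)" "b/(b+s) = 1 - s/(b+s)" "c/(c+s) = 1 - s/(c+s)"
     "e/(e+s) = 1 - s/(e+s)" using pa by (simp_all add: field_simps)
  ultimately show ?thesis by linarith
qed

lemma key:
  fixes a b c e s z k :: real
  assumes "0 \<le> a" "a \<le> b" "b \<le> e" "a + e = b + c" "s > 0" "z \<ge> 0" "k \<ge> 0"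
  shows "1/((b+s)*(c+s)) powr k * exp(-(b/(b+s)+c/(c+s))*z)
     \<le> 1/((a+s)*(e+s)) powr k * exp(-(a/(a+s)+e/(e+s))*z)"
proof -
  have q: "(a+s)*(e+s) \<le> (b+s)*(c+s)"
  proof -
    have "(b+s)*(c+s)-(a+s)*(e+s) = (b-a)*(e-b)" using assms(4)
      by (simp add: algebra_simps) (smt (verit) assms(4) mult.commute ring_class.ring_distribs(1))
    moreover have "(b-a)*(e-b) \<ge> 0" using assms by simp
    ultimately show ?thesis by linarith
  qed
  have pa: "a+s>0" "b+s>0" "c+s>0" "e+s>0" using assms by auto
  have p1: "0 < ((a+s)*(e+s)) powr k" using pa by simp
  have "((a+s)*(e+s)) powr k \<le> ((b+s)*(c+s)) powr k"
    using q pa assms by (intro powr_mono2) auto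
  hence m1: "1/((b+s)*(c+s)) powr k \<le> 1/((a+s)*(e+s)) powr k"
    using p1 pa by (intro divide_left_mono) (auto intro!: mult_pos_pos)
  have "(a/(a+s)+e/(e+s))*z \<le> (b/(b+s)+c/(c+s))*z"
    using frac_ineq[OF assms(1-5)] assms(6) by (rule mult_right_mono)
  hence m2: "exp(-(b/(b+s)+c/(c+s))*z) \<le> exp(-(a/(a+s)+e/(e+s))*z)"
    by (simp only: exp_le_cancel_iff mult_minus_left neg_le_iff_le)
  show ?thesis using m1 m2 p1 by (intro mult_mono) auto
qed

theorem lemma3:
  fixes d \<nu> :: nat and s z :: real
  assumes "d \<ge> 3" and "\<nu> \<ge> 1" and "s > 0" and "z \<ge> 0"
  shows "MTP2 \<nu> (zeta d \<nu> s z)"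
  unfolding MTP2_def
proof (intro allI impI)
  fix l x :: "nat \<Rightarrow> real"
  assume hl: "\<forall>i<\<nu>. l i > 0" and hx: "\<forall>i<\<nu>. x i > 0"
  define m where "m = (\<lambda>i. max (l i) (x i))"
  define w where "w = (\<lambda>i. min (l i) (x i))"
  define k where "k = real d / 2"
  define c0 where "c0 = real d / 2 - 2"
  define P where "P = (\<lambda>f::nat\<Rightarrow>real. \<Prod>i<\<nu>. f i powr c0)"
  define S where "S = (\<lambda>f::nat\<Rightarrow>real. \<Sum>i<\<nu>. f i)"
  have Z: "\<And>f. zeta d \<nu> s z f = P f / (S f + s) powr k * exp (- (S f / (S f + s)) * z)"
    unfolding zeta_def P_def S_def k_def c0_def by simp
  have PP: "P l * P x = P m * P w"
  proof -
    have "P l * P x = (\<Prod>i<\<nu>. (l i * x i) powr c0)"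
      unfolding P_def prod.distrib[symmetric] using hl hx
      by (intro prod.cong) (auto simp: powr_mult)
    also have "\<dots> = (\<Prod>i<\<nu>. (m i * w i) powr c0)"
      unfolding m_def w_def by (intro prod.cong refl) (simp add: max_def min_def mult.commute)
    also have "\<dots> = P m * P w"
      unfolding P_def prod.distrib[symmetric] using hl hx
      by (intro prod.cong) (auto simp: powr_mult m_def w_def)
    finally show ?thesis .
  qed
  have Ppos: "P m * P w \<ge> 0" unfolding P_def by (intro mult_nonneg_nonneg prod_nonneg) auto
  have Sw0: "0 \<le> S w" unfolding S_def w_def using hl hx by (intro sum_nonneg) auto
  have Swl: "S w \<le> S l" unfolding S_def w_def by (intro sum_mono) auto
  have Slm: "S l \<le> S m" unfolding S_def m_def by (intro sum_mono) auto
  have Seq: "S w + S m = S l + S x" unfolding S_def m_def w_def sum.distrib[symmetric]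
    by (intro sum.cong refl) (simp add: max_def min_def)
  have Sxp: "S x \<ge> 0" unfolding S_def using hx by (intro sum_nonneg) auto
  have Slp: "S l \<ge> 0" using Sw0 Swl by linarith
  have Smp: "S m \<ge> 0" using Slp Slm by linarith
  have kk: "k \<ge> 0" unfolding k_def by simp
  have gen: "(P f / (A + s) powr k * exp (- (A / (A + s)) * z)) * (P g / (B + s) powr k * exp (- (B / (B + s)) * z))
     = (P f * P g) * (1/((A+s)*(B+s)) powr k * exp(-(A/(A+s)+B/(B+s))*z))"
    if hA: "A \<ge> 0" and hB: "B \<ge> 0" for f g and A B :: real
  proof -
    have "((A+s)*(B+s)) powr k = (A+s) powr k * (B+s) powr k" using assms(3) hA hB by (simp add: powr_mult)
    thus ?thesis by (simp add: exp_add[symmetric] algebra_simps)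
  qed
  have K: "1/((S l+s)*(S x+s)) powr k * exp(-(S l/(S l+s)+S x/(S x+s))*z)
     \<le> 1/((S m+s)*(S w+s)) powr k * exp(-(S m/(S m+s)+S w/(S w+s))*z)"
    using key[OF Sw0 Swl Slm Seq assms(3,4) kk] by (simp add: mult.commute add.commute)
  show "zeta d \<nu> s z l * zeta d \<nu> s z x \<le> zeta d \<nu> s z m * zeta d \<nu> s z w"
    unfolding Z gen[OF Slp Sxp] gen[OF Smp Sw0] PP
    using K Ppos by (rule mult_left_mono)
qed

end
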